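(* Consider the recursive algorithm $\mathrm{DST}(I,\widetilde{\mathrm{opt}})$ described in the context, applied to a planar \textsc{Directed Steiner Tree} instance $I=(G=(V,E),c,r,X)$ with positive integer edge costs and an estimate $\widetilde{\mathrm{opt}}$. Let $\ell$ and $o$ be non-negative integers with $|X|\le 2^{\ell}$ and $\widetilde{\mathrm{opt}}\le 2^{o}$. If $\widetilde{\mathrm{opt}}\ge \mathrm{opt}$, where $\mathrm{opt}$ is the optimal value of $I$, then $\mathrm{DST}(I,\widetilde{\mathrm{opt}})$ returns a feasible solution of cost at most $(6\ell+1)\cdot\mathrm{opt}$. Furthermore, the total number of recursive calls made by $\mathrm{DST}(I,\widetilde{\mathrm{opt}})$ and its subsequent recursive calls is at most $|X|\cdot 2^{2\ell+o}$.
   Context: \textsc{Directed Steiner Tree}: digraph $G=(V,E)$ (parallel edges allowed, planar underlying undirected graph) with edge costs $c_e$ (here positive integers), root $r$, terminals $X\subseteq V\setminus\{r\}$; a feasible solution is $F\subseteq E$ containing a directed $r$–$t$ path for each $t\in X$, of cost $\sum_{e\in F}c_e$; $\mathrm{opt}$ is the minimum cost. $d(u,v)$ is the shortest-path distance. Induced subinstances: for a partial arborescence $T$ rooted at $r$ (a directed tree containing $r$ oriented away from $r$) with $C_1,\dots,C_h$ the weakly connected components of $G\setminus T$ (delete vertices of $T$ and incident edges), contract $T$ into $r$ to get $G_{\mathrm{contract}}$, and set $I_{C_i}=(G_{\mathrm{contract}}[C_i\cup\{r\}],c,r,C_i\cap X)$, edges inheriting costs from the edges of $G$ they come from. Algorithm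 $\mathrm{DST}(I,\widetilde{\mathrm{opt}})$: (1) If $\widetilde{\mathrm{opt}}<1$ or $d(r,t)>\widetilde{\mathrm{opt}}$ for some $t\in X$, return infeasible. (2) Else if $|X|=1$, return a shortest directed path from $r$ to the terminal. (3) Otherwise: let $\mathcal F_1=\mathrm{DST}(I,\widetilde{\mathrm{opt}}/2)$ (cost $\infty$ if infeasible). Remove all vertices $v$ with $d(r,v)>\widetilde{\mathrm{opt}}$. Giving each terminal weight $1$ and every other vertex weight $0$, compute (by the planar shortest-path separator) a partial arborescence $T$ that is the union of up to three shortest directed paths starting at $r$ such that each weakly connected component $C_1,\dots,C_h$ of $G\setminus T$ contains at most $|X|/2$ terminals. Let $\mathcal F'_i=\mathrm{DST}(I_{C_i},\widetilde{\mathrm{opt}})$ for each $i$, and $\mathcal F_2$ be the edges of $G$ corresponding to $E(T)\cup\bigcup_i\mathcal F'_i$ (cost $\infty$ if some $\mathcal F'_i$ is infeasible). If both costs are $\infty$ return infeasible; else return the cheaper of $\mathcal F_1,\mathcal F_2$. *)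

theory Defs
  imports "HOL-Analysis.Analysis" "HOL-Library.Extended_Real"
begin

text \<open>A digraph with parallel edges: edges are identifiers of type 'e with
  source and target maps. An instance also carries edge costs, a root and terminals.\<close>

record ('v, 'e) dst_inst =
  vs    :: "'v set"
  es    :: "'e set"
  src   :: "'e \<Rightarrow> 'v"
  tgt   :: "'e \<Rightarrow> 'v"
  cost  :: "'e \<Rightarrow> nat"
  root  :: "'v"
  terms :: "'v set"

definition wf_inst :: "('v, 'e) dst_inst \<Rightarrow> bool" where
  "wf_inst I \<longleftrightarrow> finite (vs I) \<and> finite (es I)
     \<and> (\<forall>e\<in>es I. src I e \<in> vs I \<and> tgt I e \<in> vs I)
     \<and> root I \<in> vs I \<and> terms I \<subseteq> vs I - {root I}
     \<and> (\<forall>e\<in>es I. cost I e > 0)"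

text \<open>Planarity of the underlying undirected multigraph (loops ignored):
  vertices are embedded injectively in the plane, every non-loop edge is an arc
  joining the images of its endpoints and containing no other vertex image, and
  two distinct non-loop edges meet only in images of common endpoints.\<close>

definition planar_inst :: "('v, 'e) dst_inst \<Rightarrow> bool" where
  "planar_inst I \<longleftrightarrow> (\<exists>(pos :: 'v \<Rightarrow> complex) (\<gamma> :: 'e \<Rightarrow> real \<Rightarrow> complex).
     inj_on pos (vs I)
     \<and> (\<forall>e\<in>es I. src I e \<noteq> tgt I e \<longrightarrow>
          arc (\<gamma> e) \<and> pathstart (\<gamma> e) = pos (src I e) \<and> pathfinish (\<gamma> e) = pos (tgt I e)
          \<and> path_image (\<gamma> e) \<inter> pos ` vs I = {pos (src I e), pos (tgt I e)})
     \<and> (\<forall>e\<in>es I. \<forall>e'\<in>es I. e \<noteq> e' \<and> src I e \<noteq> tgt I e \<and> src I e' \<noteq> tgt I e' \<longrightarrow>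
          path_image (\<gamma> e) \<inter> path_image (\<gamma> e') \<subseteq>
            pos ` ({src I e, tgt I e} \<inter> {src I e', tgt I e'})))"

definition walk :: "('v, 'e) dst_inst \<Rightarrow> 'v \<Rightarrow> 'e list \<Rightarrow> 'v \<Rightarrow> bool" where
  "walk I u p v \<longleftrightarrow> set p \<subseteq> es I \<and> u \<in> vs I \<and> v \<in> vs I
     \<and> (p = [] \<longrightarrow> u = v)
     \<and> (p \<noteq> [] \<longrightarrow> src I (hd p) = u \<and> tgt I (last p) = v
          \<and> (\<forall>i. Suc i < length p \<longrightarrow> tgt I (p ! i) = src I (p ! Suc i)))"

definition walk_cost :: "('v, 'e) dst_inst \<Rightarrow> 'e list \<Rightarrow> nat" where
  "walk_cost I p = sum_list (map (cost I) p)"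

text \<open>Shortest-path distance d(u,v) (infinite if v is unreachable).\<close>
definition dist :: "('v, 'e) dst_inst \<Rightarrow> 'v \<Rightarrow> 'v \<Rightarrow> ereal" where
  "dist I u v = (INF p \<in> {p. walk I u p v}. ereal (real (walk_cost I p)))"

definition shortest_walk :: "('v, 'e) dst_inst \<Rightarrow> 'v \<Rightarrow> 'e list \<Rightarrow> 'v \<Rightarrow> bool" where
  "shortest_walk I u p v \<longleftrightarrow> walk I u p v \<and> (\<forall>q. walk I u q v \<longrightarrow> walk_cost I p \<le> walk_cost I q)"

definition feasible :: "('v, 'e) dst_inst \<Rightarrow> 'e set \<Rightarrow> bool" where
  "feasible I F \<longleftrightarrow> F \<subseteq> es I \<and> (\<forall>t\<in>terms I. \<exists>p. walk I (root I) p t \<and> set p \<subseteq> F)"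

definition sol_cost :: "('v, 'e) dst_inst \<Rightarrow> 'e set \<Rightarrow> nat" where
  "sol_cost I F = sum (cost I) F"

definition opt :: "('v, 'e) dst_inst \<Rightarrow> ereal" where
  "opt I = (INF F \<in> {F. feasible I F}. ereal (real (sol_cost I F)))"

definition reduce :: "('v, 'e) dst_inst \<Rightarrow> real \<Rightarrow> ('v, 'e) dst_inst" where
  "reduce I optt = (let V' = {v \<in> vs I. dist I (root I) v \<le> ereal optt} in
     I\<lparr> vs := V', es := {e \<in> es I. src I e \<in> V' \<and> tgt I e \<in> V'} \<rparr>)"

definition tree_verts :: "('v, 'e) dst_inst \<Rightarrow> 'e set \<Rightarrow> 'v set" where
  "tree_verts I TE = {root I} \<union> src I ` TE \<union> tgt I ` TE"

definition wcomps :: "('v, 'e) dst_inst \<Rightarrow> 'v set \<Rightarrow> 'v set set" where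
  "wcomps I W = (let V' = vs I - W;
                     E' = {e \<in> es I. src I e \<in> V' \<and> tgt I e \<in> V'};
                     R = {(src I e, tgt I e) | e. e \<in> E'}
                 in V' // (((R \<union> R\<inverse>)\<^sup>*) \<inter> (V' \<times> V')))"

definition valid_separator :: "('v, 'e) dst_inst \<Rightarrow> 'e set \<Rightarrow> bool" where
  "valid_separator I TE \<longleftrightarrow>
     (\<exists>ps. length ps \<le> 3 \<and> (\<forall>p\<in>set ps. \<exists>v. shortest_walk I (root I) p v)
          \<and> TE = \<Union> (set ` set ps))
     \<and> (\<forall>v\<in>tree_verts I TE. card {e \<in> TE. tgt I e = v} = (if v = root I then 0 else 1))
     \<and> (\<forall>C\<in>wcomps I (tree_verts I TE). 2 * card (C \<inter> terms I) \<le> card (terms I))"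

text \<open>Induced subinstance I_C: contract T into r and take the subgraph induced by
  C \<union> {r}; edges keep their identities (so they correspond to the edges of G).\<close>
definition sub_inst :: "('v, 'e) dst_inst \<Rightarrow> 'e set \<Rightarrow> 'v set \<Rightarrow> ('v, 'e) dst_inst" where
  "sub_inst I TE C = (let W = tree_verts I TE;
       s' = (\<lambda>e. if src I e \<in> W then root I else src I e);
       t' = (\<lambda>e. if tgt I e \<in> W then root I else tgt I e)
     in \<lparr> vs = C \<union> {root I},
          es = {e \<in> es I - TE. s' e \<in> C \<union> {root I} \<and> t' e \<in> C \<union> {root I}},
          src = s', tgt = t', cost = cost I, root = root I, terms = C \<inter> terms I \<rparr>)"

text \<open>Return the cheaper of the two candidates (None = infeasible, cost infinity).\<close>
definition cheaper :: "('e \<Rightarrow> nat) \<Rightarrow> 'e set option \<Rightarrow> 'e set option \<Rightarrow> 'e set option \<Rightarrow> bool" where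
  "cheaper c F1 F2 R \<longleftrightarrow>
     (F1 = None \<and> F2 = None \<and> R = None)
     \<or> (\<exists>A. R = Some A \<and> (R = F1 \<or> R = F2)
          \<and> (\<forall>B. F1 = Some B \<or> F2 = Some B \<longrightarrow> sum c A \<le> sum c B))"

text \<open>dst_run I optt R k: some execution of DST(I, optt) returns R
  (None = infeasible) and makes k calls in total (this call and all calls
  below it). Nondeterminism: choice of shortest path, of the separator, and of
  ties between F1 and F2. Components without terminals need no recursive call.\<close>

inductive dst_run :: "('v, 'e) dst_inst \<Rightarrow> real \<Rightarrow> 'e set option \<Rightarrow> nat \<Rightarrow> bool" where
  fail: "optt < 1 \<or> (\<exists>t\<in>terms I. ereal optt < dist I (root I) t)
         \<Longrightarrow> dst_run I optt None 1"
| single: "\<not> (optt < 1 \<or> (\<exists>t\<in>terms I. ereal optt < dist I (root I) t))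
         \<Longrightarrow> terms I = {t} \<Longrightarrow> shortest_walk I (root I) p t
         \<Longrightarrow> dst_run I optt (Some (set p)) 1"
| recur: "\<not> (optt < 1 \<or> (\<exists>t\<in>terms I. ereal optt < dist I (root I) t))
         \<Longrightarrow> card (terms I) \<noteq> 1
         \<Longrightarrow> dst_run I (optt / 2) F1 k1
         \<Longrightarrow> I' = reduce I optt
         \<Longrightarrow> valid_separator I' TE
         \<Longrightarrow> Cs = {C \<in> wcomps I' (tree_verts I' TE). C \<inter> terms I' \<noteq> {}}
         \<Longrightarrow> (\<forall>C\<in>Cs. dst_run (sub_inst I' TE C) optt (Fs C) (ks C))
         \<Longrightarrow> F2 = (if (\<forall>C\<in>Cs. Fs C \<noteq> None)
                  then Some (TE \<union> (\<Union>C\<in>Cs. the (Fs C))) else None)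
         \<Longrightarrow> cheaper (cost I) F1 F2 R
         \<Longrightarrow> dst_run I optt R (1 + k1 + (\<Sum>C\<in>Cs. ks C))"

end

theory Submission
  imports Defs
begin



definition gr :: "('v, 'e) dst_inst \<Rightarrow> bool" where
  "gr I \<longleftrightarrow> (\<forall>e\<in>es I. src I e \<in> vs I \<and> tgt I e \<in> vs I)"

lemma walk_Nil[simp]: "walk I u [] v \<longleftrightarrow> u = v \<and> u \<in> vs I"
  by (auto simp: walk_def)

lemma all_nat_split: "(\<forall>i::nat. P i) \<longleftrightarrow> P 0 \<and> (\<forall>i. P (Suc i))"
  by (metis not0_implies_Suc)

lemma walk_Cons: assumes "gr I"
  shows "walk I u (e#p) v \<longleftrightarrow> e \<in> es I \<and> src I e = u \<and> walk I (tgt I e) p v"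
proof (cases p)
  case Nil
  then show ?thesis using assms by (auto simp: walk_def gr_def)
next
  case (Cons a p')
  have "(\<forall>i. Suc i < length (e#a#p') \<longrightarrow> tgt I ((e#a#p') ! i) = src I ((e#a#p') ! Suc i))
     \<longleftrightarrow> tgt I e = src I a \<and> (\<forall>i. Suc i < length (a#p') \<longrightarrow> tgt I ((a#p') ! i) = src I ((a#p') ! Suc i))"
    by (subst all_nat_split) simp
  then show ?thesis using assms Cons by (auto simp: walk_def gr_def)
qed

lemma walk_append: assumes "gr I"
  shows "walk I u (p@q) w \<longleftrightarrow> (\<exists>v. walk I u p v \<and> walk I v q w)"
proof (induction p arbitrary: u)
  case Nil
  then show ?case by (auto simp: walk_def)
next
  case (Cons a p)
  then show ?case by (auto simp: walk_Cons[OF assms])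
qed

lemma walk_snoc: assumes "gr I"
  shows "walk I u (p@[e]) w \<longleftrightarrow> walk I u p (src I e) \<and> e \<in> es I \<and> tgt I e = w"
  using assms by (auto simp: walk_append walk_Cons gr_def)

lemma walk_vs: "walk I u p v \<Longrightarrow> u \<in> vs I \<and> v \<in> vs I"
  by (auto simp: walk_def)

lemma walk_es: "walk I u p v \<Longrightarrow> set p \<subseteq> es I"
  by (auto simp: walk_def)

lemma walk_cost_Nil[simp]: "walk_cost I [] = 0" by (simp add: walk_cost_def)
lemma walk_cost_Cons[simp]: "walk_cost I (e#p) = cost I e + walk_cost I p" by (simp add: walk_cost_def)
lemma walk_cost_append[simp]: "walk_cost I (p@q) = walk_cost I p + walk_cost I q" by (simp add: walk_cost_def)

lemma walk_distinct: assumes "gr I" "walk I u p v"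
  shows "\<exists>q. walk I u q v \<and> distinct q \<and> set q \<subseteq> set p \<and> walk_cost I q \<le> walk_cost I p"
  using assms(2)
proof (induction "length p" arbitrary: p rule: less_induct)
  case less
  show ?case
  proof (cases "distinct p")
    case True
    then show ?thesis using less by auto
  next
    case False
    then obtain xs ys zs y where p: "p = xs @ [y] @ ys @ [y] @ zs"
      using not_distinct_decomp by blast
    have "walk I u (xs @ [y] @ zs) v"
      using less(2) unfolding p walk_append[OF assms(1)] walk_Cons[OF assms(1)] by auto
    moreover have "length (xs @ [y] @ zs) < length p" using p by simp
    ultimately obtain q where "walk I u q v \<and> distinct q \<and> set q \<subseteq> set (xs @ [y] @ zs) \<and> walk_cost I q \<le> walk_cost I (xs @ [y] @ zs)"
      using less(1) by blast
    then show ?thesis using p by auto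
  qed
qed

lemma walk_cost_distinct: "distinct p \<Longrightarrow> walk_cost I p = sum (cost I) (set p)"
  by (simp add: walk_cost_def sum_list_distinct_conv_sum_set)

lemma sum_set_le_walk_cost: "sum (cost I) (set p) \<le> walk_cost I p"
proof (induction p)
  case Nil thus ?case by simp
next
  case (Cons a p)
  have "sum (cost I) (set (a#p)) \<le> cost I a + sum (cost I) (set p)"
    by (simp add: sum.insert_if)
  then show ?case using Cons by simp
qed

lemma walk_prefix: assumes "gr I" "walk I u p v" "e \<in> set p"
  shows "\<exists>a b. p = a @ e # b \<and> walk I u a (src I e) \<and> walk I u (a@[e]) (tgt I e)"
proof -
  obtain a b where p: "p = a @ e # b" using assms(3) split_list by metis
  then show ?thesis using assms(2) unfolding p walk_append[OF assms(1)] walk_Cons[OF assms(1)]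
    by (auto simp: walk_snoc[OF assms(1)] dest: walk_vs)
qed




lemma dist_le: "walk I u p v \<Longrightarrow> dist I u v \<le> ereal (real (walk_cost I p))"
  unfolding dist_def by (rule INF_lower) auto

lemma dist_min: assumes "walk I u p v"
  shows "\<exists>q. walk I u q v \<and> dist I u v = ereal (real (walk_cost I q))
              \<and> (\<forall>q'. walk I u q' v \<longrightarrow> walk_cost I q \<le> walk_cost I q')"
proof -
  obtain q where q: "walk I u q v" "\<forall>q'. walk I u q' v \<longrightarrow> walk_cost I q \<le> walk_cost I q'"
    using ex_has_least_nat[of "\<lambda>p. walk I u p v" p "walk_cost I"] assms by blast
  have "dist I u v \<ge> ereal (real (walk_cost I q))"
    unfolding dist_def using q by (auto intro!: INF_greatest)
  with dist_le[OF q(1)] q show ?thesis by auto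
qed

lemma dist_fin: assumes "dist I u v \<noteq> \<infinity>" shows "\<exists>p. walk I u p v"
proof (rule ccontr)
  assume "\<not> ?thesis"
  then have "{p. walk I u p v} = {}" by auto
  then have "dist I u v = \<infinity>" unfolding dist_def by (simp add: top_ereal_def)
  with assms show False by simp
qed

lemma opt_le: "feasible I F \<Longrightarrow> opt I \<le> ereal (real (sol_cost I F))"
  unfolding opt_def by (rule INF_lower) auto

lemma opt_min: assumes "opt I \<noteq> \<infinity>"
  shows "\<exists>F. feasible I F \<and> opt I = ereal (real (sol_cost I F))"
proof -
  obtain F0 where F0: "feasible I F0"
  proof (rule ccontr)
    assume "\<not> thesis"
    then have e: "{F. feasible I F} = {}" using that by auto
    have "opt I = (INF F\<in>{}. ereal (real (sol_cost I F)))" unfolding opt_def e[symmetric] by simp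
    then have "opt I = \<infinity>" by (simp add: top_ereal_def)
    with assms show False by simp
  qed
  obtain F where F: "feasible I F" "\<forall>F'. feasible I F' \<longrightarrow> sol_cost I F \<le> sol_cost I F'"
    using ex_has_least_nat[of "\<lambda>F. feasible I F" F0 "sol_cost I"] F0 by blast
  have "opt I \<ge> ereal (real (sol_cost I F))"
    unfolding opt_def using F by (auto intro!: INF_greatest)
  with opt_le[OF F(1)] F show ?thesis by auto
qed

lemma reduce_simps[simp]:
  "root (reduce I optt) = root I" "terms (reduce I optt) = terms I"
  "src (reduce I optt) = src I" "tgt (reduce I optt) = tgt I" "cost (reduce I optt) = cost I"
  "vs (reduce I optt) = {v \<in> vs I. dist I (root I) v \<le> ereal optt}"
  "es (reduce I optt) = {e \<in> es I. src I e \<in> vs (reduce I optt) \<and> tgt I e \<in> vs (reduce I optt)}"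
  by (simp_all add: reduce_def Let_def)

lemma gr_reduce: "gr (reduce I optt)"
  unfolding gr_def by simp

lemma walk_reduce_imp: "walk (reduce I optt) u q v \<Longrightarrow> walk I u q v"
  unfolding walk_def by auto

lemma reduce_walk: assumes "gr I" "walk I (root I) p0 u" "walk I u q v"
    "real (walk_cost I p0 + walk_cost I q) \<le> optt"
  shows "walk (reduce I optt) u q v"
  using assms(2-4)
proof (induction q arbitrary: p0 u)
  case Nil
  then have "dist I (root I) u \<le> ereal optt"
    using dist_le[OF Nil(1)] by (metis add_0_right ereal_less_eq(3) order.trans walk_Nil walk_cost_Nil)
  then show ?case using Nil by auto
next
  case (Cons e q)
  have e: "e \<in> es I" "src I e = u" "walk I (tgt I e) q v"
    using Cons(3) walk_Cons[OF assms(1)] by auto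
  have w0: "walk I (root I) (p0@[e]) (tgt I e)"
    using Cons(2) e walk_snoc[OF assms(1)] by auto
  have IH: "walk (reduce I optt) (tgt I e) q v"
    using Cons(1)[OF w0 e(3)] Cons(4) by simp
  have "dist I (root I) u \<le> ereal optt"
    using dist_le[OF Cons(2)] Cons(4) by (simp add: order.trans)
  then have "u \<in> vs (reduce I optt)" using walk_vs[OF Cons(2)] by auto
  moreover have "tgt I e \<in> vs (reduce I optt)" using walk_vs[OF IH] by blast
  ultimately show ?case using IH e by (subst walk_Cons[OF gr_reduce]) auto
qed




definition wrel :: "('v, 'e) dst_inst \<Rightarrow> 'v set \<Rightarrow> ('v \<times> 'v) set" where
  "wrel I W = (let V' = vs I - W;
                     E' = {e \<in> es I. src I e \<in> V' \<and> tgt I e \<in> V'};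
                     R = {(src I e, tgt I e) | e. e \<in> E'}
                 in ((R \<union> R\<inverse>)\<^sup>*) \<inter> (V' \<times> V'))"

lemma wcomps_wrel: "wcomps I W = (vs I - W) // wrel I W"
  by (simp add: wcomps_def wrel_def Let_def)

lemma wrel_sub: "wrel I W \<subseteq> (vs I - W) \<times> (vs I - W)"
  by (auto simp: wrel_def Let_def)

lemma wrel_sym: "sym_on (vs I - W) (wrel I W)"
proof -
  define R where "R = {(src I e, tgt I e) | e. e \<in> {e \<in> es I. src I e \<in> vs I - W \<and> tgt I e \<in> vs I - W}}"
  have "sym ((R \<union> R\<inverse>)\<^sup>*)" by (rule sym_rtrancl) (auto simp: sym_def)
  then show ?thesis unfolding wrel_def Let_def R_def[symmetric] sym_on_def sym_def by blast
qed

lemma wrel_trans: "trans_on (vs I - W) (wrel I W)"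
  unfolding wrel_def Let_def trans_on_def by (auto intro: rtrancl_trans)

lemma wcomps_disj: "C \<in> wcomps I W \<Longrightarrow> D \<in> wcomps I W \<Longrightarrow> C \<noteq> D \<Longrightarrow> C \<inter> D = {}"
  unfolding wcomps_wrel using quotient_disj_strong[OF wrel_sub wrel_sym wrel_trans] by blast

lemma wcomps_sub: "C \<in> wcomps I W \<Longrightarrow> C \<subseteq> vs I - W"
  unfolding wcomps_wrel quotient_def using wrel_sub by blast

lemma wcomps_finite: "finite (vs I) \<Longrightarrow> finite (wcomps I W)"
  unfolding wcomps_wrel by (rule finite_quotient[OF _ wrel_sub]) auto

lemma wcomps_cover: "v \<in> vs I - W \<Longrightarrow> \<exists>C\<in>wcomps I W. v \<in> C"
  unfolding wcomps_wrel quotient_def by (auto simp: wrel_def Let_def)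

lemma wcomps_edge: assumes "C \<in> wcomps I W" "tgt I e \<in> C" "e \<in> es I" "src I e \<in> vs I - W"
  shows "src I e \<in> C"
proof -
  define V' where "V' = vs I - W"
  define R where "R = {(src I e, tgt I e) | e. e \<in> {e \<in> es I. src I e \<in> V' \<and> tgt I e \<in> V'}}"
  have wr: "wrel I W = (R \<union> R\<inverse>)\<^sup>* \<inter> (V' \<times> V')" unfolding wrel_def Let_def R_def V'_def by simp
  obtain x where x: "x \<in> V'" "C = wrel I W `` {x}" using assms(1) unfolding wcomps_wrel quotient_def V'_def by blast
  have "tgt I e \<in> V'" using assms(1,2) wcomps_sub V'_def by blast
  then have "(tgt I e, src I e) \<in> R \<union> R\<inverse>" using assms(3,4) unfolding R_def V'_def by blast
  moreover have "(x, tgt I e) \<in> (R \<union> R\<inverse>)\<^sup>*" using assms(2) x wr by auto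
  ultimately have "(x, src I e) \<in> (R \<union> R\<inverse>)\<^sup>*" by (meson rtrancl.rtrancl_into_rtrancl)
  then show ?thesis using x assms(4) wr V'_def by auto
qed

lemma root_tree_verts[simp]: "root I \<in> tree_verts I TE"
  by (simp add: tree_verts_def)

lemma sub_inst_simps[simp]:
  "vs (sub_inst I TE C) = C \<union> {root I}"
  "root (sub_inst I TE C) = root I"
  "terms (sub_inst I TE C) = C \<inter> terms I"
  "cost (sub_inst I TE C) = cost I"
  "src (sub_inst I TE C) = (\<lambda>e. if src I e \<in> tree_verts I TE then root I else src I e)"
  "tgt (sub_inst I TE C) = (\<lambda>e. if tgt I e \<in> tree_verts I TE then root I else tgt I e)"
  "es (sub_inst I TE C) = {e \<in> es I - TE. src (sub_inst I TE C) e \<in> C \<union> {root I} \<and> tgt (sub_inst I TE C) e \<in> C \<union> {root I}}"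
  by (simp_all add: sub_inst_def Let_def)

lemma gr_sub: "gr (sub_inst I TE C)"
  unfolding gr_def by (simp only: sub_inst_simps) blast

lemma wf_gr: "wf_inst I \<Longrightarrow> gr I" by (simp add: wf_inst_def gr_def)

lemma wf_sub: assumes "wf_inst I" "C \<in> wcomps I (tree_verts I TE)"
  shows "wf_inst (sub_inst I TE C)"
proof -
  have C: "C \<subseteq> vs I - tree_verts I TE" using wcomps_sub[OF assms(2)] .
  have "root I \<notin> C" using C by auto
  moreover have "finite C" using C assms(1) unfolding wf_inst_def by (meson finite_Diff finite_subset)
  ultimately show ?thesis using assms(1) unfolding wf_inst_def by (auto simp del: sub_inst_simps(5,6) simp add: sub_inst_simps(5,6)[symmetric])
qed

lemma wf_reduce: assumes "wf_inst I" "1 \<le> optt" "\<forall>t\<in>terms I. dist I (root I) t \<le> ereal optt"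
  shows "wf_inst (reduce I optt)"
proof -
  have "dist I (root I) (root I) \<le> ereal optt"
    using dist_le[of I "root I" "[]" "root I"] assms by (auto simp: wf_inst_def order.trans)
  then show ?thesis using assms unfolding wf_inst_def by auto
qed




lemma run_small: "dst_run I optt R k \<Longrightarrow> optt < 1 \<Longrightarrow> k = 1 \<and> R = None"
  by (induction rule: dst_run.induct) auto

lemma nofail_dist: "\<not> (optt < 1 \<or> (\<exists>t\<in>terms I. ereal optt < dist I (root I) t))
   \<Longrightarrow> 1 \<le> optt \<and> (\<forall>t\<in>terms I. dist I (root I) t \<le> ereal optt)"
  by (auto simp: not_less)

lemma comps_terms_sum:
  assumes "wf_inst I'" "Cs \<subseteq> wcomps I' W"
  shows "(\<Sum>C\<in>Cs. card (C \<inter> terms I')) \<le> card (terms I')"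
proof -
  have fin: "finite Cs" using assms wcomps_finite[of I' W] finite_subset unfolding wf_inst_def by blast
  have ft: "finite (terms I')" using assms(1) unfolding wf_inst_def by (meson finite_Diff finite_subset)
  have "(\<Sum>C\<in>Cs. card (C \<inter> terms I')) = card (\<Union>C\<in>Cs. C \<inter> terms I')"
    using wcomps_disj[of _ I' W] assms(2) ft by (intro card_UN_disjoint[symmetric]) (auto simp: fin)
  also have "\<dots> \<le> card (terms I')" by (rule card_mono[OF ft]) auto
  finally show ?thesis .
qed

lemma count:
  assumes "dst_run I optt R k"
  shows "wf_inst I \<Longrightarrow> terms I \<noteq> {} \<Longrightarrow> card (terms I) \<le> 2 ^ l \<Longrightarrow> optt \<le> 2 ^ ob
         \<Longrightarrow> k \<le> card (terms I) * 2 ^ (2 * l + ob)"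
  using assms
proof (induction arbitrary: l ob rule: dst_run.induct)
  case (fail optt I)
  have "finite (terms I)" using fail(2) unfolding wf_inst_def by (meson finite_Diff finite_subset)
  then have "card (terms I) \<ge> 1" using fail(3) by (simp add: Suc_le_eq card_gt_0_iff)
  then show ?case by (metis mult_le_mono one_le_power one_le_numeral mult_1)
next
  case (single optt I t p)
  then show ?case by simp
next
  case (recur optt I F1 k1 I' TE Cs Fs ks F2 R)
  define x where "x = card (terms I)"
  have ft: "finite (terms I)" using recur.prems(1) unfolding wf_inst_def by (meson finite_Diff finite_subset)
  have x2: "x \<ge> 2" using recur.hyps(2) recur.prems(2) ft unfolding x_def
    by (metis One_nat_def card_0_eq less_2_cases not_less)
  have "l \<ge> 1"
  proof (rule ccontr)
    assume "\<not> ?thesis" then have "l = 0" by simp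
    then show False using recur.prems(3) x2 x_def by simp
  qed
  then obtain m where m: "l = Suc m" using not0_implies_Suc by fastforce
  define N where "N = (2::nat) ^ (2 * m + ob)"
  have big: "2 ^ (2 * l + ob) = 4 * N" unfolding N_def m by (simp add: power_add)
  have nf: "1 \<le> optt" "\<forall>t\<in>terms I. dist I (root I) t \<le> ereal optt" using nofail_dist[OF recur.hyps(1)] by auto
  have wfI': "wf_inst I'" using wf_reduce[OF recur.prems(1) nf] recur.hyps(4) by simp
  have tI': "terms I' = terms I" using recur.hyps(4) by simp
  have k1: "k1 \<le> 2 * x * N \<or> k1 = 1"
  proof (cases ob)
    case 0
    then have "optt / 2 < 1" using recur.prems(4) by simp
    then show ?thesis using run_small[OF recur.hyps(3)] by simp
  next
    case (Suc n)
    have "optt / 2 \<le> 2 ^ n" using recur.prems(4) Suc by simp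
    then have "k1 \<le> x * 2 ^ (2 * l + n)" using recur.IH(1)[OF recur.prems(1,2,3)] x_def by blast
    also have "\<dots> = 2 * x * N" unfolding N_def m Suc by (simp add: power_add)
    finally show ?thesis by simp
  qed
  have ks: "ks C \<le> card (C \<inter> terms I) * N" if C: "C \<in> Cs" for C
  proof -
    have Cw: "C \<in> wcomps I' (tree_verts I' TE)" using C recur.hyps(6) by simp
    have "2 * card (C \<inter> terms I) \<le> x" using recur.hyps(5) Cw tI' x_def unfolding valid_separator_def by auto
    then have "card (C \<inter> terms I) \<le> 2 ^ m" using recur.prems(3) x_def m by simp
    moreover have "C \<inter> terms I \<noteq> {}" using C recur.hyps(6) tI' by simp
    moreover have IHC: "\<forall>l ob. wf_inst (sub_inst I' TE C) \<longrightarrow> C \<inter> terms I \<noteq> {} \<longrightarrow> card (C \<inter> terms I) \<le> 2 ^ l \<longrightarrow> optt \<le> 2 ^ ob \<longrightarrow> ks C \<le> card (C \<inter> terms I) * 2 ^ (2 * l + ob)"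
      using conjunct2[OF bspec[OF recur.IH(2) C]] tI' by simp
    ultimately have "ks C \<le> card (C \<inter> terms I) * 2 ^ (2 * m + ob)"
      using wf_sub[OF wfI' Cw] recur.prems(4) by blast
    then show ?thesis unfolding N_def .
  qed
  have "(\<Sum>C\<in>Cs. ks C) \<le> (\<Sum>C\<in>Cs. card (C \<inter> terms I) * N)" using ks by (rule sum_mono)
  also have "\<dots> = (\<Sum>C\<in>Cs. card (C \<inter> terms I')) * N" using tI' by (simp add: sum_distrib_right)
  also have "\<dots> \<le> x * N"
  proof -
    have "(\<Sum>C\<in>Cs. card (C \<inter> terms I')) \<le> x"
      using comps_terms_sum[OF wfI', of Cs "tree_verts I' TE"] recur.hyps(6) tI' x_def by auto
    then show ?thesis by simp
  qed
  finally have S: "(\<Sum>C\<in>Cs. ks C) \<le> x * N" .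
  have N1: "N \<ge> 1" unfolding N_def by simp
  then have "x * N \<ge> 2" using x2 by (metis mult_le_mono mult.right_neutral)
  then have "1 + k1 + (\<Sum>C\<in>Cs. ks C) \<le> 4 * x * N" using k1 S by auto
  then show ?case using big x_def by simp
qed




lemma sep_TE: assumes "valid_separator I' TE"
  shows "TE \<subseteq> es I'"
  using assms unfolding valid_separator_def shortest_walk_def by (auto dest!: walk_es)

lemma sep_reach: assumes "gr I'" "valid_separator I' TE" "v \<in> tree_verts I' TE" "root I' \<in> vs I'"
  shows "\<exists>p. walk I' (root I') p v \<and> set p \<subseteq> TE"
proof -
  obtain ps where ps: "\<forall>p\<in>set ps. \<exists>v. shortest_walk I' (root I') p v" "TE = \<Union> (set ` set ps)"
    using assms(2) unfolding valid_separator_def by blast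
  have E: "\<exists>p. walk I' (root I') p (src I' e) \<and> set p \<subseteq> TE \<and> walk I' (root I') (p@[e]) (tgt I' e)"
    if e: "e \<in> TE" for e
  proof -
    obtain p w where p: "p \<in> set ps" "e \<in> set p" "walk I' (root I') p w" using e ps unfolding shortest_walk_def by blast
    obtain a b where "p = a @ e # b" "walk I' (root I') a (src I' e)" "walk I' (root I') (a@[e]) (tgt I' e)"
      using walk_prefix[OF assms(1) p(3,2)] by blast
    then show ?thesis using p ps(2) by (intro exI[of _ a]) auto
  qed
  show ?thesis
  proof (cases "v = root I'")
    case True
    then show ?thesis using assms(4) by (intro exI[of _ "[]"]) auto
  next
    case False
    then obtain e where e: "e \<in> TE" "v = src I' e \<or> v = tgt I' e"
      using assms(3) unfolding tree_verts_def by auto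
    from E[OF e(1)] obtain p where p: "walk I' (root I') p (src I' e)" "set p \<subseteq> TE" "walk I' (root I') (p@[e]) (tgt I' e)"
      by blast
    show ?thesis using e p by (intro exI[of _ "if v = src I' e then p else p@[e]"]) auto
  qed
qed


lemma lift:
  assumes g: "gr I" and I': "I' = reduce I optt"
    and Wg: "\<forall>w\<in>tree_verts I' TE. \<exists>p. walk I (root I) p w \<and> set p \<subseteq> F"
    and wq: "walk (sub_inst I' TE C) u q v" and qF: "set q \<subseteq> F"
    and u: "u = root I \<or> (\<exists>p. walk I (root I) p u \<and> set p \<subseteq> F)"
  shows "v = root I \<or> (\<exists>p. walk I (root I) p v \<and> set p \<subseteq> F)"
  using wq qF u
proof (induction q arbitrary: u)
  case Nil
  then show ?case by simp
next
  case (Cons e q)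
  let ?S = "sub_inst I' TE C"
  let ?W = "tree_verts I' TE"
  have e: "e \<in> es ?S" "src ?S e = u" "walk ?S (tgt ?S e) q v"
    using Cons(2) unfolding walk_Cons[OF gr_sub] by blast+
  have eI: "e \<in> es I" using e(1) I' by auto
  have eF: "e \<in> F" using Cons(3) by simp
  have rW: "root I \<in> ?W" using I' root_tree_verts[of I' TE] by simp
  have "tgt ?S e = root I \<or> (\<exists>p. walk I (root I) p (tgt ?S e) \<and> set p \<subseteq> F)"
  proof (cases "tgt I e \<in> ?W")
    case True
    then show ?thesis using I' by simp
  next
    case False
    then have t: "tgt ?S e = tgt I e" using I' by simp
    have "\<exists>p. walk I (root I) p (src I e) \<and> set p \<subseteq> F"
    proof (cases "src I e \<in> ?W")
      case True
      then show ?thesis using Wg by blast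
    next
      case False
      then have "src ?S e = src I e" using I' by simp
      then have "u = src I e" using e(2) by simp
      moreover have "u \<noteq> root I" using False rW \<open>u = src I e\<close> by auto
      ultimately show ?thesis using Cons(4) by blast
    qed
    then obtain p where p: "walk I (root I) p (src I e)" "set p \<subseteq> F" by blast
    have "walk I (root I) (p@[e]) (tgt I e)" using p(1) eI walk_snoc[OF g] by auto
    then show ?thesis using t p(2) eF by (intro disjI2 exI[of _ "p@[e]"]) auto
  qed
  then show ?case using Cons(1)[OF e(3)] Cons(3) by auto
qed

lemma feas:
  assumes "dst_run I optt R k"
  shows "wf_inst I \<Longrightarrow> R = Some F \<Longrightarrow> feasible I F"
  using assms
proof (induction arbitrary: F rule: dst_run.induct)
  case (fail optt I)
  then show ?case by simp
next
  case (single optt I t p)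
  then show ?case unfolding feasible_def shortest_walk_def by (auto dest: walk_es)
next
  case (recur optt I F1 k1 I' TE Cs Fs ks F2 R)
  have g: "gr I" using recur.prems(1) wf_gr by blast
  have nf: "1 \<le> optt" "\<forall>t\<in>terms I. dist I (root I) t \<le> ereal optt" using nofail_dist[OF recur.hyps(1)] by auto
  have wfI': "wf_inst I'" using wf_reduce[OF recur.prems(1) nf] recur.hyps(4) by simp
  have tI': "terms I' = terms I" "root I' = root I" using recur.hyps(4) by simp_all
  have F2feas: "feasible I G" if G: "F2 = Some G" for G
  proof -
    have all: "\<forall>C\<in>Cs. Fs C \<noteq> None" using G recur.hyps(7) by (auto split: if_splits)
    have Gd: "G = TE \<union> (\<Union>C\<in>Cs. the (Fs C))" using G recur.hyps(7) all by auto
    have Cfeas: "feasible (sub_inst I' TE C) (the (Fs C))" if C: "C \<in> Cs" for C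
    proof -
      have Cw: "C \<in> wcomps I' (tree_verts I' TE)" using C recur.hyps(6) by simp
      show ?thesis using conjunct2[OF bspec[OF recur.IH(2) C]] wf_sub[OF wfI' Cw] all C by auto
    qed
    have GE: "G \<subseteq> es I"
    proof -
      have "TE \<subseteq> es I" using sep_TE[OF recur.hyps(5)] recur.hyps(4) by auto
      moreover have "the (Fs C) \<subseteq> es I" if "C \<in> Cs" for C
        using Cfeas[OF that] recur.hyps(4) unfolding feasible_def by auto
      ultimately show ?thesis using Gd by auto
    qed
    have Wg: "\<forall>w\<in>tree_verts I' TE. \<exists>p. walk I (root I) p w \<and> set p \<subseteq> G"
    proof
      fix w assume "w \<in> tree_verts I' TE"
      moreover have "root I' \<in> vs I'" using wfI' unfolding wf_inst_def by simp
      ultimately obtain p where "walk I' (root I') p w" "set p \<subseteq> TE"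
        using sep_reach[OF _ recur.hyps(5)] gr_reduce recur.hyps(4) by blast
      then show "\<exists>p. walk I (root I) p w \<and> set p \<subseteq> G"
        using walk_reduce_imp recur.hyps(4) Gd by fastforce
    qed
    have "\<exists>p. walk I (root I) p t \<and> set p \<subseteq> G" if t: "t \<in> terms I" for t
    proof (cases "t \<in> tree_verts I' TE")
      case True
      then show ?thesis using Wg by blast
    next
      case False
      have "t \<in> vs I'" using wfI' t tI' unfolding wf_inst_def by auto
      then obtain C where C: "C \<in> wcomps I' (tree_verts I' TE)" "t \<in> C"
        using wcomps_cover[of t I' "tree_verts I' TE"] False by blast
      then have CC: "C \<in> Cs" using recur.hyps(6) t tI' by auto
      have fe: "\<forall>t\<in>terms (sub_inst I' TE C). \<exists>p. walk (sub_inst I' TE C) (root (sub_inst I' TE C)) p t \<and> set p \<subseteq> the (Fs C)"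
        using Cfeas[OF CC] unfolding feasible_def by blast
      have "t \<in> terms (sub_inst I' TE C)" "root (sub_inst I' TE C) = root I" using C(2) t tI' by simp_all
      then obtain q where q: "walk (sub_inst I' TE C) (root I) q t" "set q \<subseteq> the (Fs C)"
        using fe by metis
      have "set q \<subseteq> G" using q(2) Gd CC by auto
      from lift[OF g recur.hyps(4) Wg q(1) this] have "t = root I \<or> (\<exists>p. walk I (root I) p t \<and> set p \<subseteq> G)"
        by simp
      moreover have "t \<noteq> root I" using t recur.prems(1) unfolding wf_inst_def by auto
      ultimately show ?thesis by simp
    qed
    then show ?thesis using GE unfolding feasible_def by auto
  qed
  have "R = F1 \<or> R = F2" using recur.hyps(8) recur.prems(2) unfolding cheaper_def by auto
  then show ?case using recur.IH(1)[OF recur.prems(1)] F2feas recur.prems(2) by auto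
qed




lemma walk_cost_reduce[simp]: "walk_cost (reduce I optt) p = walk_cost I p"
  by (simp add: walk_cost_def)

lemma feas_walk: assumes "wf_inst I" "feasible I F" "t \<in> terms I"
  shows "\<exists>p. walk I (root I) p t \<and> set p \<subseteq> F \<and> walk_cost I p \<le> sol_cost I F"
proof -
  have g: "gr I" using assms(1) wf_gr by blast
  obtain p where p: "walk I (root I) p t" "set p \<subseteq> F" using assms(2,3) unfolding feasible_def by blast
  obtain q where q: "walk I (root I) q t" "distinct q" "set q \<subseteq> set p"
    using walk_distinct[OF g p(1)] by blast
  have fin: "finite F" using assms(1,2) unfolding feasible_def wf_inst_def by (meson finite_subset)
  have "walk_cost I q = sum (cost I) (set q)" using q(2) by (rule walk_cost_distinct)
  also have "\<dots> \<le> sum (cost I) F" using q(3) p(2) fin by (intro sum_mono2) auto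
  finally show ?thesis using q p unfolding sol_cost_def by auto
qed

lemma sol_cost_pos: assumes "wf_inst I" "feasible I F" "terms I \<noteq> {}"
  shows "1 \<le> sol_cost I F"
proof -
  obtain t where t: "t \<in> terms I" using assms(3) by auto
  obtain p where p: "walk I (root I) p t" "set p \<subseteq> F" using assms(2) t unfolding feasible_def by blast
  have "t \<noteq> root I" using assms(1) t unfolding wf_inst_def by auto
  then have "p \<noteq> []" using p(1) by auto
  then obtain e where e: "e \<in> set p" by (cases p) auto
  have fin: "finite F" using assms(1,2) unfolding feasible_def wf_inst_def by (meson finite_subset)
  have "e \<in> es I" using e walk_es[OF p(1)] by blast
  then have "cost I e \<ge> 1" using assms(1) unfolding wf_inst_def by (simp add: Suc_le_eq)
  also have "cost I e \<le> sum (cost I) F" using e p(2) fin by (intro member_le_sum) auto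
  finally show ?thesis unfolding sol_cost_def .
qed

lemma sum_Union_list_le: assumes "\<forall>p\<in>set ps. finite (A p)"
  shows "sum (f::'a \<Rightarrow> nat) (\<Union>p\<in>set ps. A p) \<le> sum_list (map (\<lambda>p. sum f (A p)) ps)"
  using assms
proof (induction ps)
  case Nil then show ?case by simp
next
  case (Cons a ps)
  have "sum f (\<Union>p\<in>set (a#ps). A p) = sum f (A a \<union> (\<Union>p\<in>set ps. A p))" by simp
  also have "\<dots> \<le> sum f (A a) + sum f (\<Union>p\<in>set ps. A p)"
    using sum.union_inter[of "A a" "\<Union>p\<in>set ps. A p" f] Cons.prems by simp
  also have "\<dots> \<le> sum f (A a) + sum_list (map (\<lambda>p. sum f (A p)) ps)" using Cons by simp
  finally show ?case by simp
qed

lemma sum_list_le_len: "(\<forall>x\<in>set xs. real (f x) \<le> c) \<Longrightarrow> real (sum_list (map f xs)) \<le> real (length xs) * c"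
  by (induction xs) (auto simp: algebra_simps)

lemma TE_cost: assumes g: "gr I" and sep: "valid_separator (reduce I optt) TE" and o1: "0 \<le> optt"
  shows "real (sum (cost I) TE) \<le> 3 * optt"
proof -
  let ?I' = "reduce I optt"
  obtain ps where ps: "length ps \<le> 3" "\<forall>p\<in>set ps. \<exists>v. shortest_walk ?I' (root ?I') p v" "TE = \<Union> (set ` set ps)"
    using sep unfolding valid_separator_def by blast
  have pc: "real (walk_cost I p) \<le> optt" if p: "p \<in> set ps" for p
  proof -
    obtain v where v: "shortest_walk ?I' (root I) p v" using ps(2) p by auto
    have vI: "v \<in> vs ?I'" using v unfolding shortest_walk_def using walk_vs by metis
    then have d: "dist I (root I) v \<le> ereal optt" by simp
    then have dfin: "dist I (root I) v \<noteq> \<infinity>" by auto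
    obtain q0 where q0: "walk I (root I) q0 v" using dist_fin[OF dfin] by blast
    obtain q where q: "walk I (root I) q v" "dist I (root I) v = ereal (real (walk_cost I q))"
      using dist_min[OF q0] by blast
    have qc: "real (walk_cost I q) \<le> optt" using q(2) d by simp
    have "walk ?I' (root I) q v"
      using reduce_walk[OF g _ q(1), of "[]"] qc walk_vs[OF q(1)] by simp
    then have "walk_cost I p \<le> walk_cost I q" using v unfolding shortest_walk_def by simp
    then show ?thesis using qc by linarith
  qed
  have "sum (cost I) TE \<le> sum_list (map (\<lambda>p. sum (cost I) (set p)) ps)"
    unfolding ps(3) using sum_Union_list_le[of ps set "cost I"] by simp
  also have "\<dots> \<le> sum_list (map (walk_cost I) ps)"
    by (intro sum_list_mono sum_set_le_walk_cost)
  finally have "real (sum (cost I) TE) \<le> real (sum_list (map (walk_cost I) ps))" by (simp only: of_nat_le_iff)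
  also have "\<dots> \<le> real (length ps) * optt" using pc by (intro sum_list_le_len) auto
  also have "\<dots> \<le> 3 * optt" using ps(1) o1 by (intro mult_right_mono) auto
  finally show ?thesis .
qed


lemma restrict_walk:
  assumes g: "gr I'" and C: "C \<in> wcomps I' (tree_verts I' TE)"
    and w: "walk I' u p v" and vC: "v \<in> C" and pF: "set p \<subseteq> F"
  shows "(\<exists>q. walk (sub_inst I' TE C) (root I') q v \<and> set q \<subseteq> {e \<in> F \<inter> es (sub_inst I' TE C). tgt I' e \<in> C})
       \<or> (u \<in> C \<and> (\<exists>q. walk (sub_inst I' TE C) u q v \<and> set q \<subseteq> {e \<in> F \<inter> es (sub_inst I' TE C). tgt I' e \<in> C}))"
  using w pF
proof (induction p arbitrary: u)
  case Nil
  then have "u = v" by simp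
  then show ?case using vC by (intro disjI2 conjI exI[of _ "[]"]) simp_all
next
  case (Cons e p)
  let ?S = "sub_inst I' TE C"
  let ?W = "tree_verts I' TE"
  let ?FC = "{e \<in> F \<inter> es ?S. tgt I' e \<in> C}"
  have e: "e \<in> es I'" "src I' e = u" "walk I' (tgt I' e) p v"
    using Cons(2) unfolding walk_Cons[OF g] by blast+
  have eF: "e \<in> F" using Cons(3) by simp
  have CW: "C \<subseteq> vs I' - ?W" using wcomps_sub[OF C] .
  from Cons(1)[OF e(3)] Cons(3) consider
    (a) "\<exists>q. walk ?S (root I') q v \<and> set q \<subseteq> ?FC"
  | (b) "tgt I' e \<in> C" "\<exists>q. walk ?S (tgt I' e) q v \<and> set q \<subseteq> ?FC" by auto
  then show ?case
  proof cases
    case a then show ?thesis by blast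
  next
    case b
    then obtain q where q: "walk ?S (tgt I' e) q v" "set q \<subseteq> ?FC" by blast
    have tW: "tgt I' e \<notin> ?W" using b(1) CW by auto
    then have eTE: "e \<notin> TE" unfolding tree_verts_def by auto
    have tS: "tgt ?S e = tgt I' e" using tW by simp
    show ?thesis
    proof (cases "src I' e \<in> ?W")
      case True
      then have sS: "src ?S e = root I'" by simp
      have eS: "e \<in> es ?S" using e(1) eTE sS tS b(1) by simp
      have "walk ?S (root I') (e#q) v" using eS sS tS q(1) unfolding walk_Cons[OF gr_sub] by simp
      moreover have "set (e#q) \<subseteq> ?FC" using q(2) eF eS b(1) by auto
      ultimately show ?thesis by blast
    next
      case False
      have "src I' e \<in> vs I'" using e(1) g unfolding gr_def by auto
      then have sC: "src I' e \<in> C" using wcomps_edge[OF C b(1) e(1)] False by blast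
      have sS: "src ?S e = src I' e" using False by simp
      have eS: "e \<in> es ?S" using e(1) eTE sS tS b(1) sC by simp
      have "walk ?S u (e#q) v" using eS sS tS q(1) e(2) unfolding walk_Cons[OF gr_sub] by simp
      moreover have "set (e#q) \<subseteq> ?FC" using q(2) eF eS b(1) by auto
      ultimately show ?thesis using sC e(2) by blast
    qed
  qed
qed

lemma restrict:
  assumes wf: "wf_inst I" and I': "I' = reduce I optt"
    and C: "C \<in> wcomps I' (tree_verts I' TE)"
    and Ff: "feasible I F" and Fc: "real (sol_cost I F) \<le> optt"
  shows "feasible (sub_inst I' TE C) {e \<in> F \<inter> es (sub_inst I' TE C). tgt I e \<in> C}"
proof -
  have g: "gr I" using wf wf_gr by blast
  have rC: "root I \<notin> C" using wcomps_sub[OF C] I' root_tree_verts[of I' TE] by auto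
  have "\<exists>q. walk (sub_inst I' TE C) (root I) q t \<and> set q \<subseteq> {e \<in> F \<inter> es (sub_inst I' TE C). tgt I e \<in> C}"
    if t: "t \<in> C" "t \<in> terms I" for t
  proof -
    obtain p where p: "walk I (root I) p t" "set p \<subseteq> F" "walk_cost I p \<le> sol_cost I F"
      using feas_walk[OF wf Ff t(2)] by blast
    have "walk I' (root I) p t"
      using reduce_walk[OF g _ p(1), of "[]" optt] p(3) Fc walk_vs[OF p(1)] I' by simp
    have gI': "gr I'" using gr_reduce I' by simp
    have eqs: "root I' = root I" "tgt I' = tgt I" using I' by simp_all
    from restrict_walk[OF gI' C \<open>walk I' (root I) p t\<close>[folded eqs(1)] t(1) p(2)] rC
    obtain q where q: "walk (sub_inst I' TE C) (root I') q t" "set q \<subseteq> {e \<in> F \<inter> es (sub_inst I' TE C). tgt I' e \<in> C}"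
      unfolding eqs by blast
    show ?thesis using q unfolding eqs by blast
  qed
  moreover have "{e \<in> F \<inter> es (sub_inst I' TE C). tgt I e \<in> C} \<subseteq> es (sub_inst I' TE C)" by blast
  ultimately show ?thesis unfolding feasible_def using I' by simp
qed




declare of_nat_sum[simp del]

lemma sum_UN_le: "finite K \<Longrightarrow> \<forall>i\<in>K. finite (A i) \<Longrightarrow> sum (f::'a \<Rightarrow> nat) (\<Union>i\<in>K. A i) \<le> (\<Sum>i\<in>K. sum f (A i))"
proof (induction K rule: finite_induct)
  case empty then show ?case by simp
next
  case (insert x F)
  have "sum f (\<Union>i\<in>insert x F. A i) = sum f (A x \<union> (\<Union>i\<in>F. A i))" by simp
  also have "\<dots> \<le> sum f (A x) + sum f (\<Union>i\<in>F. A i)"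
    using sum.union_inter[of "A x" "\<Union>i\<in>F. A i" f] insert by simp
  also have "\<dots> \<le> sum f (A x) + (\<Sum>i\<in>F. sum f (A i))" using insert by simp
  finally show ?case using insert by simp
qed

lemma cheaper_some: assumes "cheaper c F1 F2 R" "F1 = Some B \<or> F2 = Some B"
  shows "\<exists>A. R = Some A \<and> sum c A \<le> sum c B"
  using assms unfolding cheaper_def by auto

lemma costb:
  assumes "dst_run I optt R k"
  shows "wf_inst I \<Longrightarrow> terms I \<noteq> {} \<Longrightarrow> card (terms I) \<le> 2 ^ l \<Longrightarrow> opt I \<le> ereal optt
     \<Longrightarrow> opt I \<le> ereal r \<Longrightarrow> \<exists>F. R = Some F \<and> real (sol_cost I F) \<le> real (6 * l + 1) * r"
  using assms
proof (induction arbitrary: l r rule: dst_run.induct)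
  case (fail optt I)
  have "opt I \<noteq> \<infinity>" using fail(5) by auto
  then obtain Fo where Fo: "feasible I Fo" "opt I = ereal (real (sol_cost I Fo))" using opt_min by blast
  have o1: "1 \<le> sol_cost I Fo" using sol_cost_pos[OF fail(2) Fo(1) fail(3)] .
  have oo: "real (sol_cost I Fo) \<le> optt" using fail(5) Fo(2) by simp
  show ?case
  proof (cases "optt < 1")
    case True then show ?thesis using o1 oo by simp
  next
    case False
    then obtain t where t: "t \<in> terms I" "ereal optt < dist I (root I) t" using fail(1) by blast
    obtain p where p: "walk I (root I) p t" "walk_cost I p \<le> sol_cost I Fo"
      using feas_walk[OF fail(2) Fo(1) t(1)] by blast
    have "dist I (root I) t \<le> ereal optt" using dist_le[OF p(1)] p(2) oo
      by (meson ereal_less_eq(3) of_nat_le_iff order.trans)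
    then show ?thesis using t(2) by simp
  qed
next
  case (single optt I t p)
  have "opt I \<noteq> \<infinity>" using single(8) by auto
  then obtain Fo where Fo: "feasible I Fo" "opt I = ereal (real (sol_cost I Fo))" using opt_min by blast
  have ro: "real (sol_cost I Fo) \<le> r" using single(8) Fo(2) by simp
  obtain q where q: "walk I (root I) q t" "walk_cost I q \<le> sol_cost I Fo"
    using feas_walk[OF single(4) Fo(1)] single(2) by blast
  have "sol_cost I (set p) \<le> walk_cost I p" unfolding sol_cost_def by (rule sum_set_le_walk_cost)
  also have "\<dots> \<le> walk_cost I q" using single(3) q(1) unfolding shortest_walk_def by blast
  finally have "real (sol_cost I (set p)) \<le> r" using q(2) ro by linarith
  moreover have "r \<ge> 0" using ro by (meson of_nat_0_le_iff order.trans)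
  ultimately have "real (sol_cost I (set p)) \<le> real (6 * l + 1) * r"
    using mult_right_mono[of 1 "real (6 * l + 1)" r] by simp
  then show ?case by blast
next
  case (recur optt I F1 k1 I' TE Cs Fs ks F2 R)
  have "opt I \<noteq> \<infinity>" using recur.prems(4) by auto
  then obtain Fo where Fo: "feasible I Fo" "opt I = ereal (real (sol_cost I Fo))" using opt_min by blast
  define oc where "oc = sol_cost I Fo"
  have o1: "1 \<le> oc" using sol_cost_pos[OF recur.prems(1) Fo(1) recur.prems(2)] oc_def by simp
  have oo: "real oc \<le> optt" using recur.prems(4) Fo(2) oc_def by simp
  have ro: "real oc \<le> r" using recur.prems(5) Fo(2) oc_def by simp
  have g: "gr I" using recur.prems(1) wf_gr by blast
  have nf: "1 \<le> optt" "\<forall>t\<in>terms I. dist I (root I) t \<le> ereal optt" using nofail_dist[OF recur.hyps(1)] by auto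
  have wfI': "wf_inst I'" using wf_reduce[OF recur.prems(1) nf] recur.hyps(4) by simp
  have tI': "terms I' = terms I" using recur.hyps(4) by simp
  have cI': "cost I' = cost I" using recur.hyps(4) by simp
  show ?case
  proof (cases "2 * real oc \<le> optt")
    case True
    then have "opt I \<le> ereal (optt / 2)" using Fo(2) oc_def by simp
    then obtain B where B: "F1 = Some B" "real (sol_cost I B) \<le> real (6 * l + 1) * r"
      using recur.IH(1)[OF recur.prems(1,2,3) _ recur.prems(5)] by blast
    obtain A where A: "R = Some A" "sum (cost I) A \<le> sum (cost I) B"
      using cheaper_some[OF recur.hyps(8)] B(1) by blast
    have "real (sol_cost I A) \<le> real (sol_cost I B)" using A(2) unfolding sol_cost_def by (simp only: of_nat_le_iff)
    then show ?thesis using A(1) B(2) by auto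
  next
    case False
    define x where "x = card (terms I)"
    have ft: "finite (terms I)" using recur.prems(1) unfolding wf_inst_def by (meson finite_Diff finite_subset)
    have x2: "x \<ge> 2" using recur.hyps(2) recur.prems(2) ft unfolding x_def
      by (metis One_nat_def card_0_eq less_2_cases not_less)
    have "l \<ge> 1"
    proof (rule ccontr)
      assume "\<not> ?thesis" then have "l = 0" by simp
      then show False using recur.prems(3) x2 x_def by simp
    qed
    then obtain m where m: "l = Suc m" using not0_implies_Suc by fastforce
    define FC where "FC = (\<lambda>C. {e \<in> Fo \<inter> es (sub_inst I' TE C). tgt I e \<in> C})"
    have FCs: "FC C \<subseteq> Fo" for C unfolding FC_def by blast
    have FCt: "e \<in> FC C \<Longrightarrow> tgt I e \<in> C" for e C unfolding FC_def by blast
    have finFo: "finite Fo" using recur.prems(1) Fo(1) unfolding feasible_def wf_inst_def by (meson finite_subset)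
    have finCs: "finite Cs" using recur.hyps(6) wcomps_finite[of I' "tree_verts I' TE"] wfI'
      unfolding wf_inst_def by auto
    have subC: "\<exists>B. Fs C = Some B \<and> feasible (sub_inst I' TE C) B
                 \<and> real (sum (cost I) B) \<le> real (6 * m + 1) * real (sum (cost I) (FC C))"
      if C: "C \<in> Cs" for C
    proof -
      have Cw: "C \<in> wcomps I' (tree_verts I' TE)" using C recur.hyps(6) by simp
      have wfS: "wf_inst (sub_inst I' TE C)" using wf_sub[OF wfI' Cw] .
      have feasC: "feasible (sub_inst I' TE C) (FC C)"
        unfolding FC_def using restrict[OF recur.prems(1) recur.hyps(4) Cw Fo(1)] oo oc_def by simp
      have "sum (cost I) (FC C) \<le> sum (cost I) Fo" using finFo FCs by (intro sum_mono2) auto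
      then have le_o: "real (sum (cost I) (FC C)) \<le> real oc" unfolding oc_def sol_cost_def by simp
      have optS: "opt (sub_inst I' TE C) \<le> ereal (real (sum (cost I) (FC C)))"
        using opt_le[OF feasC] cI' unfolding sol_cost_def by simp
      have optS2: "opt (sub_inst I' TE C) \<le> ereal optt" using optS le_o oo
        by (meson ereal_less_eq(3) order.trans)
      have "2 * card (C \<inter> terms I) \<le> x" using recur.hyps(5) Cw tI' x_def unfolding valid_separator_def by auto
      then have cardC: "card (C \<inter> terms I) \<le> 2 ^ m" using recur.prems(3) x_def m by simp
      have neC: "C \<inter> terms I \<noteq> {}" using C recur.hyps(6) tI' by simp
      have IHC: "\<forall>l r. wf_inst (sub_inst I' TE C) \<longrightarrow> terms (sub_inst I' TE C) \<noteq> {} \<longrightarrow> card (terms (sub_inst I' TE C)) \<le> 2 ^ l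
           \<longrightarrow> opt (sub_inst I' TE C) \<le> ereal optt \<longrightarrow> opt (sub_inst I' TE C) \<le> ereal r
           \<longrightarrow> (\<exists>F. Fs C = Some F \<and> real (sol_cost (sub_inst I' TE C) F) \<le> real (6 * l + 1) * r)"
        using conjunct2[OF bspec[OF recur.IH(2) C]] by blast
      have "terms (sub_inst I' TE C) = C \<inter> terms I" using tI' by simp
      then obtain B where B: "Fs C = Some B" "real (sol_cost (sub_inst I' TE C) B) \<le> real (6 * m + 1) * real (sum (cost I) (FC C))"
        using IHC wfS neC cardC optS2 optS by metis
      have "feasible (sub_inst I' TE C) B"
        using feas[OF conjunct1[OF bspec[OF recur.IH(2) C]] wfS B(1)] .
      then show ?thesis using B cI' unfolding sol_cost_def by auto
    qed
    have all: "\<forall>C\<in>Cs. Fs C \<noteq> None" using subC by fastforce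
    define G where "G = TE \<union> (\<Union>C\<in>Cs. the (Fs C))"
    have F2G: "F2 = Some G" using recur.hyps(7) all G_def by simp
    have finB: "\<forall>C\<in>Cs. finite (the (Fs C))"
    proof
      fix C assume C: "C \<in> Cs"
      then obtain B where "Fs C = Some B" "feasible (sub_inst I' TE C) B" using subC by blast
      moreover have "finite (es (sub_inst I' TE C))"
        using wf_sub[OF wfI', of C TE] C recur.hyps(6) unfolding wf_inst_def by auto
      ultimately show "finite (the (Fs C))" unfolding feasible_def by (auto intro: finite_subset)
    qed
    have finTE: "finite TE" using sep_TE[OF recur.hyps(5)] wfI' unfolding wf_inst_def by (meson finite_subset)
    have "sum (cost I) G \<le> sum (cost I) TE + sum (cost I) (\<Union>C\<in>Cs. the (Fs C))"
      unfolding G_def using sum.union_inter[of TE "\<Union>C\<in>Cs. the (Fs C)" "cost I"] finTE finB finCs by simp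
    also have "\<dots> \<le> sum (cost I) TE + (\<Sum>C\<in>Cs. sum (cost I) (the (Fs C)))"
      using sum_UN_le[OF finCs finB] by simp
    finally have G1: "real (sum (cost I) G) \<le> real (sum (cost I) TE) + (\<Sum>C\<in>Cs. real (sum (cost I) (the (Fs C))))"
      by (metis of_nat_add of_nat_le_iff of_nat_sum)
    have TEc: "real (sum (cost I) TE) \<le> 3 * optt"
      using TE_cost[OF g _ ] recur.hyps(5) recur.hyps(4) nf(1) by simp
    have "(\<Sum>C\<in>Cs. real (sum (cost I) (the (Fs C)))) \<le> (\<Sum>C\<in>Cs. real (6 * m + 1) * real (sum (cost I) (FC C)))"
      using subC by (intro sum_mono) force
    also have "\<dots> = real (6 * m + 1) * real (\<Sum>C\<in>Cs. sum (cost I) (FC C))"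
      by (simp only: of_nat_sum[of "\<lambda>C. sum (cost I) (FC C)" Cs] sum_distrib_left)
    also have "\<dots> \<le> real (6 * m + 1) * real oc"
    proof -
      have fFC: "\<forall>C\<in>Cs. finite (FC C)" using finFo FCs finite_subset by blast
      have disj: "\<forall>C\<in>Cs. \<forall>D\<in>Cs. C \<noteq> D \<longrightarrow> FC C \<inter> FC D = {}"
      proof (intro ballI impI)
        fix C D assume CD: "C \<in> Cs" "D \<in> Cs" "C \<noteq> D"
        have "C \<in> wcomps I' (tree_verts I' TE)" "D \<in> wcomps I' (tree_verts I' TE)"
          using CD recur.hyps(6) by simp_all
        then have "C \<inter> D = {}" by (rule wcomps_disj[OF _ _ CD(3)])
        then show "FC C \<inter> FC D = {}" using FCt by blast
      qed
      have "(\<Sum>C\<in>Cs. sum (cost I) (FC C)) = sum (cost I) (\<Union>C\<in>Cs. FC C)"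
        using sum.UNION_disjoint[OF finCs fFC disj, of "cost I"] by simp
      also have "\<dots> \<le> sum (cost I) Fo" using finFo FCs by (intro sum_mono2) auto
      finally show ?thesis unfolding oc_def sol_cost_def by (intro mult_left_mono) auto
    qed
    finally have G2: "real (sum (cost I) G) \<le> 3 * optt + real (6 * m + 1) * real oc"
      using G1 TEc by linarith
    have "3 * optt \<le> 6 * real oc" using False by linarith
    then have "real (sum (cost I) G) \<le> real (6 * l + 1) * real oc" using G2 m by (simp add: algebra_simps)
    also have "\<dots> \<le> real (6 * l + 1) * r" using ro by (intro mult_left_mono) auto
    finally have Gc: "real (sum (cost I) G) \<le> real (6 * l + 1) * r" .
    obtain A where A: "R = Some A" "sum (cost I) A \<le> sum (cost I) G"
      using cheaper_some[OF recur.hyps(8)] F2G by blast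
    have "real (sum (cost I) A) \<le> real (sum (cost I) G)" using A(2) by (simp only: of_nat_le_iff)
    then show ?thesis using A(1) Gc unfolding sol_cost_def by auto
  qed
qed



theorem lemma3:
  fixes I :: "('v, 'e) dst_inst" and optt :: real and lvl obits :: nat
    and R :: "'e set option" and k :: nat
  assumes "wf_inst I" and "planar_inst I" and "terms I \<noteq> {}"
    and "card (terms I) \<le> 2 ^ lvl" and "optt \<le> 2 ^ obits"
    and "dst_run I optt R k"
  shows "(opt I \<le> ereal optt \<longrightarrow>
            (\<exists>F. R = Some F \<and> feasible I F
                 \<and> ereal (real (sol_cost I F)) \<le> ereal (real (6 * lvl + 1)) * opt I))
         \<and> k \<le> card (terms I) * 2 ^ (2 * lvl + obits)"
proof
  show "k \<le> card (terms I) * 2 ^ (2 * lvl + obits)"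
    using count[OF assms(6) assms(1,3,4,5)] .
  show "opt I \<le> ereal optt \<longrightarrow>
            (\<exists>F. R = Some F \<and> feasible I F
                 \<and> ereal (real (sol_cost I F)) \<le> ereal (real (6 * lvl + 1)) * opt I)"
  proof
    assume h: "opt I \<le> ereal optt"
    then have "opt I \<noteq> \<infinity>" by auto
    then obtain Fo where Fo: "feasible I Fo" "opt I = ereal (real (sol_cost I Fo))" using opt_min by blast
    obtain F where F: "R = Some F" "real (sol_cost I F) \<le> real (6 * lvl + 1) * real (sol_cost I Fo)"
      using costb[OF assms(6) assms(1,3,4) h, of "real (sol_cost I Fo)"] Fo(2) by auto
    have "feasible I F" using feas[OF assms(6) assms(1) F(1)] .
    moreover have "ereal (real (sol_cost I F)) \<le> ereal (real (6 * lvl + 1)) * opt I"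
      using F(2) unfolding Fo(2) by simp
    ultimately show "\<exists>F. R = Some F \<and> feasible I F
                 \<and> ereal (real (sol_cost I F)) \<le> ereal (real (6 * lvl + 1)) * opt I"
      using F(1) by blast
  qed
qed

end
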